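(* Let $\lambda>0$, $\omega_0\ne0$ with $\omega_0^2/(2\lambda)<2$, and let $\tilde{\mathbf r}_\lambda(t,\omega_0)$ be the trajectory defined in the context. Then at every time $t\ge0$ the minimum possible root-mean-square size of the system for its current cohesion is achieved: with $\varphi=\varphi(t)$, $$b(\varphi)=\frac{C(\mathbf m)}{f(\varphi)\sqrt{\sum_jm_j}}=\min\{b(\mathbf r):\ \mathbf r\in\mathfrak R,\ f(\mathbf r)=f(\varphi)\},$$ where $b(\varphi)$ and $f(\varphi)$ are the root-mean-square size and the cohesion of the system at time $t$.
   Context: Fix $N\ge2$, masses $\mathbf m=(m_1,\dots,m_N)$, $m_i>0$, $\gamma>0$. Planar configuration space $\mathfrak R=\{\mathbf r=(\mathbf r_1,\dots,\mathbf r_N)\in(\mathbb R^2)^N:\ \mathbf r_i\neq\mathbf r_j \text{ for } i\neq j\}$; cohesion $f(\mathbf r)=\sum_{i<j}\frac{\gamma m_im_j}{|\mathbf r_j-\mathbf r_i|}$; $g(\mathbf r)=\sum_i m_i|\mathbf r_i|^2$; root-mean-square size $b(\mathbf r)=\sqrt{g(\mathbf r)/\sum_jm_j}$; $C(\mathbf m)=\min\{f(\mathbf r):\mathbf r\in\mathfrak R,\ g(\mathbf r)=1\}$. Let $\mathbf r_\lambda=(\mathbf r_{1\lambda},\dots,\mathbf r_{N\lambda})$ be a global minimizer of $f+\lambda g$ on $\mathfrak R$; identify $\mathbb R^2$ with $\mathbb C$, $z_{j\lambda}\leftrightarrow\mathbf r_{j\lambda}$. Put $e=1-\omega_0^2/(2\lambda)$,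 $a(\varphi)=(1-e)/(1-e\cos\varphi)$, and define $\varphi(t)$ by $\omega_0t=\int_0^{\varphi(t)}\frac{(1-e)^2\,d\alpha}{(1-e\cos\alpha)^2}$. The trajectory $\tilde{\mathbf r}_\lambda(t,\omega_0)$ has $j$-th particle at complex position $z_{j\lambda}a(\varphi(t))e^{i\varphi(t)}$. *)

theory Defs
  imports "HOL-Analysis.Analysis"
begin

text \<open>Particles are indexed by 0..<N; a planar configuration is a map nat => complex
  (R^2 identified with C); only the values at indices < N matter.\<close>

definition config_space :: "nat \<Rightarrow> (nat \<Rightarrow> complex) set" where
  "config_space N = {r. \<forall>i<N. \<forall>j<N. i \<noteq> j \<longrightarrow> r i \<noteq> r j}"

definition cohesion :: "nat \<Rightarrow> real \<Rightarrow> (nat \<Rightarrow> real) \<Rightarrow> (nat \<Rightarrow> complex) \<Rightarrow> real" where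
  "cohesion N \<gamma> m r = (\<Sum>j<N. \<Sum>i<j. \<gamma> * m i * m j / cmod (r j - r i))"

definition gfun :: "nat \<Rightarrow> (nat \<Rightarrow> real) \<Rightarrow> (nat \<Rightarrow> complex) \<Rightarrow> real" where
  "gfun N m r = (\<Sum>i<N. m i * (cmod (r i))\<^sup>2)"

definition rms_size :: "nat \<Rightarrow> (nat \<Rightarrow> real) \<Rightarrow> (nat \<Rightarrow> complex) \<Rightarrow> real" where
  "rms_size N m r = sqrt (gfun N m r / (\<Sum>j<N. m j))"

text \<open>C(m) = min {f r | r in R, g r = 1} (the minimum exists; we write it as the infimum).\<close>
definition Cm :: "nat \<Rightarrow> real \<Rightarrow> (nat \<Rightarrow> real) \<Rightarrow> real" where
  "Cm N \<gamma> m = Inf {cohesion N \<gamma> m r | r. r \<in> config_space N \<and> gfun N m r = 1}"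

definition ecc :: "real \<Rightarrow> real \<Rightarrow> real" where
  "ecc lam \<omega>0 = 1 - \<omega>0\<^sup>2 / (2 * lam)"

definition afun :: "real \<Rightarrow> real \<Rightarrow> real" where
  "afun e \<phi> = (1 - e) / (1 - e * cos \<phi>)"

definition phifun :: "real \<Rightarrow> real \<Rightarrow> real \<Rightarrow> real" where
  "phifun e \<omega>0 t = (THE p. \<omega>0 * t = (LBINT \<alpha>=0..p. (1 - e)\<^sup>2 / (1 - e * cos \<alpha>)\<^sup>2))"

definition traj :: "(nat \<Rightarrow> complex) \<Rightarrow> real \<Rightarrow> real \<Rightarrow> real \<Rightarrow> nat \<Rightarrow> complex" where
  "traj z lam \<omega>0 t j =
     (let e = ecc lam \<omega>0; p = phifun e \<omega>0 t
      in z j * complex_of_real (afun e p) * exp (\<i> * complex_of_real p))"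

end

theory Submission
  imports Defs
begin

lemma cs_scale:
  assumes "r \<in> config_space N" "c \<noteq> 0"
  shows "(\<lambda>j. c * r j) \<in> config_space N"
  using assms unfolding config_space_def by auto

lemma coh_scale:
  assumes "c \<noteq> 0"
  shows "cohesion N \<gamma> m (\<lambda>j. c * r j) = cohesion N \<gamma> m r / cmod c"
proof -
  have "\<And>i j. \<gamma> * m i * m j / cmod (c * r j - c * r i) = (\<gamma> * m i * m j / cmod (r j - r i)) / cmod c"
    by (simp add: right_diff_distrib[symmetric] norm_mult)
  then show ?thesis unfolding cohesion_def sum_divide_distrib by presburger
qed

lemma g_scale:
  shows "gfun N m (\<lambda>j. c * r j) = (cmod c)\<^sup>2 * gfun N m r"
  unfolding gfun_def by (simp add: sum_distrib_left norm_mult power_mult_distrib algebra_simps)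

lemma g_pos:
  assumes "r \<in> config_space N" "N \<ge> 2" "\<forall>i<N. m i > 0"
  shows "gfun N m r > 0"
proof -
  have "r 0 \<noteq> r 1" using assms unfolding config_space_def by auto
  then obtain i where i: "i < N" "r i \<noteq> 0"
  proof (cases "r 0 = 0")
    case True
    then show ?thesis using that[of 1] \<open>r 0 \<noteq> r 1\<close> assms(2) by auto
  next
    case False
    then show ?thesis using that[of 0] assms(2) by auto
  qed
  have "m i * (cmod (r i))\<^sup>2 > 0" using i assms(3) by simp
  also have "m i * (cmod (r i))\<^sup>2 \<le> gfun N m r" unfolding gfun_def
    by (rule member_le_sum[where f="\<lambda>i. m i * (cmod (r i))\<^sup>2"]) (use i assms(3) in auto)
  finally show ?thesis .
qed

lemma coh_pos:
  assumes "r \<in> config_space N" "N \<ge> 2" "\<forall>i<N. m i > 0" "\<gamma> > 0"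
  shows "cohesion N \<gamma> m r > 0"
proof -
  have d: "r 1 \<noteq> r 0" using assms unfolding config_space_def by auto
  have nn: "\<And>j. j < N \<Longrightarrow> 0 \<le> (\<Sum>i<j. \<gamma> * m i * m j / cmod (r j - r i))"
  proof (intro sum_nonneg divide_nonneg_nonneg)
    fix j x assume "j < N" "x \<in> {..<j}"
    then have "m x > 0" "m j > 0" using assms(3) by auto
    then show "0 \<le> \<gamma> * m x * m j" using assms(4) by simp
  qed simp
  have "0 < \<gamma> * m 0 * m 1 / cmod (r 1 - r 0)" using assms d by auto
  also have "\<dots> = (\<Sum>i<1. \<gamma> * m i * m 1 / cmod (r 1 - r i))" by simp
  also have "\<dots> \<le> cohesion N \<gamma> m r" unfolding cohesion_def
    by (rule member_le_sum[where f="\<lambda>j. \<Sum>i<j. \<gamma> * m i * m j / cmod (r j - r i)"])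
       (use assms nn in auto)
  finally show ?thesis .
qed

theorem theorem8p4:
  fixes N :: nat and \<gamma> lam \<omega>0 t :: real and m :: "nat \<Rightarrow> real" and z :: "nat \<Rightarrow> complex"
  assumes "N \<ge> 2"
    and "\<forall>i<N. m i > 0"
    and "\<gamma> > 0"
    and "lam > 0"
    and "\<omega>0 \<noteq> 0"
    and "\<omega>0\<^sup>2 / (2 * lam) < 2"
    and "z \<in> config_space N"
    and "\<forall>r\<in>config_space N.
           cohesion N \<gamma> m z + lam * gfun N m z \<le> cohesion N \<gamma> m r + lam * gfun N m r"
    and "t \<ge> 0"
  shows "rms_size N m (traj z lam \<omega>0 t)
           = Cm N \<gamma> m / (cohesion N \<gamma> m (traj z lam \<omega>0 t) * sqrt (\<Sum>j<N. m j))
       \<and> traj z lam \<omega>0 t \<in> config_space N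
       \<and> (\<forall>r\<in>config_space N.
             cohesion N \<gamma> m r = cohesion N \<gamma> m (traj z lam \<omega>0 t)
             \<longrightarrow> rms_size N m (traj z lam \<omega>0 t) \<le> rms_size N m r)"
proof -
  define f where "f = cohesion N \<gamma> m"
  define g where "g = gfun N m"
  define K where "K r = f r * sqrt (g r)" for r
  define e where "e = ecc lam \<omega>0"
  define p where "p = phifun e \<omega>0 t"
  define a where "a = afun e p"
  define c where "c = complex_of_real a * exp (\<i> * complex_of_real p)"
  have q: "\<omega>0\<^sup>2 / (2 * lam) > 0" using assms(4,5) by simp
  have e1: "e < 1" "e > -1" using q assms(6) unfolding e_def ecc_def by auto
  have "\<bar>e * cos p\<bar> < 1"
  proof -
    have "\<bar>e * cos p\<bar> = \<bar>e\<bar> * \<bar>cos p\<bar>" by (simp add: abs_mult)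
    also have "\<dots> \<le> \<bar>e\<bar>" using abs_cos_le_one[of p] by (simp add: mult_left_le)
    finally show ?thesis using e1 by linarith
  qed
  then have "1 - e * cos p > 0" by linarith
  then have apos: "a > 0" unfolding a_def afun_def using e1 by simp
  have cm: "cmod c = a" using apos unfolding c_def by (simp add: norm_mult)
  have c0: "c \<noteq> 0" using apos unfolding c_def by simp
  define w where "w = traj z lam \<omega>0 t"
  have w: "w = (\<lambda>j. c * z j)"
    unfolding w_def traj_def c_def a_def p_def e_def Let_def by (auto simp: algebra_simps)
  have wcs: "w \<in> config_space N" using w cs_scale[OF assms(7) c0] by simp
  have gpos: "\<And>r. r \<in> config_space N \<Longrightarrow> g r > 0" unfolding g_def using g_pos assms by blast
  have fpos: "\<And>r. r \<in> config_space N \<Longrightarrow> f r > 0" unfolding f_def using coh_pos assms by blast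
  have minK: "K z \<le> K r" if r: "r \<in> config_space N" for r
  proof -
    define s where "s = sqrt (g z) / sqrt (g r)"
    have sp: "s > 0" using gpos r assms(7) unfolding s_def by simp
    define r' where "r' = (\<lambda>j. complex_of_real s * r j)"
    have r'cs: "r' \<in> config_space N" unfolding r'_def using cs_scale[OF r] sp by simp
    have gr': "g r' = g z" unfolding r'_def g_def g_scale s_def
      using gpos[OF r] gpos[OF assms(7)] by (simp add: g_def power_divide norm_divide)
    have fr': "f r' = f r / s" unfolding r'_def f_def using coh_scale[of "complex_of_real s"] sp by simp
    have "f r' \<ge> f z" using assms(8) r'cs gr' unfolding f_def g_def by force
    have "K r = s * f r' * sqrt (g r)" unfolding K_def fr' using sp by simp
    also have "\<dots> = f r' * sqrt (g z)" unfolding s_def using gpos[OF r] by simp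
    finally show ?thesis unfolding K_def using \<open>f r' \<ge> f z\<close> gpos[OF assms(7)]
      by (simp add: mult_right_mono)
  qed
  have Kw: "K w = K z"
  proof -
    have "K w = f z / a * sqrt (a\<^sup>2 * g z)" unfolding K_def w f_def g_def
      using coh_scale[OF c0] g_scale cm by simp
    also have "\<dots> = K z" unfolding K_def using apos by (simp add: real_sqrt_mult)
    finally show ?thesis .
  qed
  have Cm: "Cm N \<gamma> m = K z"
  proof -
    define z' where "z' = (\<lambda>j. complex_of_real (1 / sqrt (g z)) * z j)"
    have gz: "g z > 0" using gpos assms(7) by blast
    have z'cs: "z' \<in> config_space N" unfolding z'_def by (rule cs_scale[OF assms(7)]) (use gz in simp)
    have gz': "g z' = 1" unfolding z'_def g_def g_scale using gz by (simp add: g_def power_divide norm_divide)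
    have fz': "f z' = f z * sqrt (g z)" unfolding z'_def f_def
      using coh_scale[of "complex_of_real (1 / sqrt (g z))" N \<gamma> m z] gz
      by (simp add: norm_divide)
    have Kz': "K z' = K z" unfolding K_def fz' gz' by simp
    show ?thesis unfolding Cm_def
    proof (rule cInf_eq_minimum)
      show "K z \<in> {cohesion N \<gamma> m r |r. r \<in> config_space N \<and> gfun N m r = 1}"
        using Kz' gz' z'cs unfolding K_def f_def g_def by (metis (mono_tags, lifting) mem_Collect_eq mult_1_right real_sqrt_one)
    next
      fix x assume "x \<in> {cohesion N \<gamma> m r |r. r \<in> config_space N \<and> gfun N m r = 1}"
      then obtain r where "r \<in> config_space N" "g r = 1" "x = f r" unfolding f_def g_def by auto
      then show "K z \<le> x" using minK[of r] unfolding K_def by simp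
    qed
  qed
  have M: "(\<Sum>j<N. m j) > 0"
    using assms(1,2) by (intro sum_pos) (auto simp: lessThan_empty_iff)
  have part1: "rms_size N m w = Cm N \<gamma> m / (f w * sqrt (\<Sum>j<N. m j))"
    unfolding Cm Kw[symmetric] using fpos[OF wcs] unfolding K_def rms_size_def
    by (simp add: g_def real_sqrt_divide)
  have part3: "rms_size N m w \<le> rms_size N m r" if r: "r \<in> config_space N" "f r = f w" for r
  proof -
    have "K w \<le> K r" using minK[OF r(1)] Kw by simp
    then have "sqrt (g w) \<le> sqrt (g r)" unfolding K_def r(2) using fpos[OF wcs] by simp
    then have "g w \<le> g r" by simp
    then show ?thesis unfolding rms_size_def g_def using M by (simp add: divide_right_mono)
  qed
  show ?thesis using part1 wcs part3 unfolding w_def f_def by auto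
qed

end
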